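(* Assume $n$ is even. If $n\equiv 0\pmod 4$ and $q$ is odd, then exactly two lines of $\mathcal D$ are fixed (setwise) by $j$; otherwise exactly one line of $\mathcal D$ is fixed by $j$.
   Context: Let $q$ be a prime power, $F=\mathbb F_q$, $n\ge 2$ an integer, and $L=\mathbb F_{q^n}\supseteq F$. Regard $L$ as an $n$-dimensional $F$-vector space; $\mathrm{PG}(n-1,q)$ denotes the projective space whose points are the one-dimensional $F$-subspaces $Fx$, $x\in L^*$, and whose lines are the two-dimensional $F$-subspaces (identified with their sets of points). Define $j:\mathrm{PG}(n-1,q)\to\mathrm{PG}(n-1,q)$ by $j(Fx)=Fx^{-1}$. When $n$ is even, $C$ denotes the unique subfield of $L$ of order $q^2$; for $x\in L^*$, $Cx$ is a two-dimensional $F$-subspace of $L$, regarded as a line of $\mathrm{PG}(n-1,q)$, and $\mathcal D=\{Cx: x\in L^*\}$ is the Desarguesian line spread. A line $\ell$ is fixed by $j$ if $j(\ell)=\ell$ as sets of points. *)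

theory Defs
  imports Main "HOL-Computational_Algebra.Primes"
begin

definition is_subfield :: "'a::field set \<Rightarrow> bool" where
  "is_subfield K \<longleftrightarrow> 0 \<in> K \<and> 1 \<in> K \<and>
     (\<forall>x\<in>K. \<forall>y\<in>K. x + y \<in> K \<and> x * y \<in> K) \<and>
     (\<forall>x\<in>K. - x \<in> K) \<and> (\<forall>x\<in>K. x \<noteq> 0 \<longrightarrow> inverse x \<in> K)"

text \<open>The point F x of PG(n-1,q): the one-dimensional F-subspace spanned by x.\<close>
definition pt :: "'a::field set \<Rightarrow> 'a \<Rightarrow> 'a set" where
  "pt F x = (\<lambda>c. c * x) ` F"

definition points :: "'a::field set \<Rightarrow> 'a set set" where
  "points F = {pt F x | x. x \<noteq> 0}"

definition jmap :: "'a::field set \<Rightarrow> 'a set \<Rightarrow> 'a set" where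
  "jmap F P = pt F (inverse (SOME x. x \<noteq> 0 \<and> P = pt F x))"

text \<open>The line C x (a 2-dimensional F-subspace), identified with its set of points.\<close>
definition lineD :: "'a::field set \<Rightarrow> 'a set \<Rightarrow> 'a \<Rightarrow> 'a set set" where
  "lineD F C x = {pt F y | y. y \<in> (\<lambda>c. c * x) ` C \<and> y \<noteq> 0}"

definition spreadD :: "'a::field set \<Rightarrow> 'a set \<Rightarrow> 'a set set set" where
  "spreadD F C = {lineD F C x | x. x \<noteq> 0}"

end

theory Submission
  imports Defs "HOL-Computational_Algebra.Polynomial"
begin

lemma roots_unity_card:
  fixes d :: nat assumes "d \<ge> 1"
  shows "card {x::'a::field. x^d = 1} \<le> d"
proof -
  define p :: "'a poly" where "p = monom 1 d - 1"
  have c: "coeff p d = 1" using assms by (simp add: p_def coeff_monom)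
  hence "p \<noteq> 0" by auto
  have deg: "degree p \<le> d" unfolding p_def
    by (rule degree_diff_le) (auto simp: degree_monom_le)
  have "{x::'a. x^d = 1} = {x. poly p x = 0}" by (auto simp: p_def poly_monom)
  also have "card \<dots> \<le> degree p" by (rule card_poly_roots_bound) fact
  finally show ?thesis using deg by simp
qed

lemma fiber_card:
  assumes "finite A" "f ` A = B" "\<And>b. b \<in> B \<Longrightarrow> card {a\<in>A. f a = b} = k"
  shows "card A = k * card B"
proof -
  have "A = (\<Union>b\<in>B. {a\<in>A. f a = b})" using assms(2) by auto
  moreover have "card (\<Union>b\<in>B. {a\<in>A. f a = b}) = (\<Sum>b\<in>B. card {a\<in>A. f a = b})"
    by (rule card_UN_disjoint) (use assms(1,2) in auto)
  ultimately have "card A = (\<Sum>b\<in>B. card {a\<in>A. f a = b})" by simp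
  also have "\<dots> = k * card B" using assms(3) by simp
  finally show ?thesis .
qed

lemma subfield_props:
  assumes "is_subfield K"
  shows "0 \<in> K" "1 \<in> K" "x \<in> K \<Longrightarrow> y \<in> K \<Longrightarrow> x + y \<in> K" "x \<in> K \<Longrightarrow> y \<in> K \<Longrightarrow> x * y \<in> K"
    "x \<in> K \<Longrightarrow> - x \<in> K" "x \<in> K \<Longrightarrow> inverse x \<in> K"
  using assms unfolding is_subfield_def
  by (blast, blast, blast, blast, blast, metis inverse_zero)

lemma subfield_div: "is_subfield K \<Longrightarrow> x \<in> K \<Longrightarrow> y \<in> K \<Longrightarrow> x / y \<in> K"
  by (simp add: divide_inverse subfield_props)

lemma subfield_pow: "is_subfield K \<Longrightarrow> x \<in> K \<Longrightarrow> x ^ m \<in> K"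
  by (induction m) (auto simp: subfield_props)

lemma subfield_UNIV: "is_subfield (UNIV :: 'a::field set)"
  by (simp add: is_subfield_def)

lemma subfield_lagrange:
  fixes K :: "'a::{field,finite} set"
  assumes K: "is_subfield K" and c: "c \<in> K" "c \<noteq> 0"
  shows "c ^ (card K - 1) = 1"
proof -
  let ?S = "K - {0}"
  have fin: "finite ?S" by simp
  have bij: "bij_betw (\<lambda>y. c * y) ?S ?S"
    by (rule bij_betw_byWitness[where f'="\<lambda>y. y / c"]) (use c K in \<open>auto simp: subfield_props subfield_div\<close>)
  have "prod (\<lambda>y. y) ?S = prod (\<lambda>y. c * y) ?S"
    using prod.reindex_bij_betw[OF bij, of "\<lambda>y. y"] by simp
  also have "\<dots> = c ^ card ?S * prod (\<lambda>y. y) ?S" by (simp add: prod.distrib)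
  finally have "c ^ card ?S = 1"
    by (metis (no_types, lifting) DiffE fin insertCI mult_cancel_right1 prod_zero_iff)
  moreover have "card ?S = card K - 1" using K by (simp add: subfield_props)
  ultimately show ?thesis by simp
qed

definition sqs :: "'a::field set \<Rightarrow> 'a set" where "sqs K = (\<lambda>y. y^2) ` (K - {0})"

lemma sq_card:
  fixes K :: "'a::{field,finite} set"
  assumes K: "is_subfield K" and two: "(2::'a) \<noteq> 0"
  shows "card K - 1 = 2 * card (sqs K)"
proof -
  have "card (K - {0}) = 2 * card (sqs K)"
  proof (rule fiber_card[where f="\<lambda>y. y^2"])
    show "finite (K - {0})" by simp
    show "(\<lambda>y. y^2) ` (K - {0}) = sqs K" by (simp add: sqs_def)
    fix b assume "b \<in> sqs K"
    then obtain y0 where y0: "y0 \<in> K" "y0 \<noteq> 0" "b = y0^2" unfolding sqs_def by blast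
    have "{a \<in> K - {0}. a^2 = b} = {y0, -y0}"
    proof
      show "{a \<in> K - {0}. a^2 = b} \<subseteq> {y0, -y0}"
      proof
        fix a assume "a \<in> {a \<in> K - {0}. a^2 = b}"
        hence "a^2 = y0^2" using y0(3) by simp
        hence "a = y0 \<or> a = -y0" by (simp add: power2_eq_iff)
        thus "a \<in> {y0, -y0}" by blast
      qed
      have "-y0 \<in> K" using y0(1) subfield_props(5)[OF K] by blast
      thus "{y0, -y0} \<subseteq> {a \<in> K - {0}. a^2 = b}"
        using y0 by auto
    qed
    moreover have "y0 \<noteq> -y0"
    proof
      assume h: "y0 = -y0"
      have "2 * y0 = y0 + y0" by (rule mult_2)
      also have "\<dots> = -y0 + y0" using arg_cong[OF h, of "\<lambda>t. t + y0"] .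
      also have "\<dots> = 0" by (rule left_minus)
      finally have "2 * y0 = 0" .
      with two y0(2) show False by simp
    qed
    ultimately show "card {a \<in> K - {0}. a^2 = b} = 2" by simp
  qed
  moreover have "card (K - {0}) = card K - 1" using subfield_props(1)[OF K] by (simp add: card_Diff_singleton)
  ultimately show ?thesis by simp
qed
lemma euler_crit:
  fixes K :: "'a::{field,finite} set"
  assumes K: "is_subfield K" and two: "(2::'a) \<noteq> 0"
    and c: "c \<in> K" "c \<noteq> 0" "c ^ ((card K - 1) div 2) = 1"
  shows "c \<in> sqs K"
proof -
  define h where "h = (card K - 1) div 2"
  have ch0: "card K - 1 = 2 * card (sqs K)" by (rule sq_card[OF K two])
  have ch2: "card (sqs K) = h" unfolding h_def ch0 by simp
  have ch: "card K - 1 = 2 * h" "card (sqs K) = h" using ch0 ch2 by simp_all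
  have sub: "sqs K \<subseteq> {x. x^h = 1}"
  proof
    fix x assume "x \<in> sqs K"
    then obtain y where y: "y \<in> K" "y \<noteq> 0" "x = y^2" by (auto simp: sqs_def)
    have "x^h = y^(card K - 1)" using y ch by (simp add: power_mult)
    also have "\<dots> = 1" using subfield_lagrange[OF K y(1,2)] .
    finally show "x \<in> {x. x^h = 1}" by simp
  qed
  have "(1::'a)^2 \<in> sqs K" unfolding sqs_def by (rule imageI) (use subfield_props(2)[OF K] in simp)
  hence "1 \<in> sqs K" by simp
  hence "card (sqs K) > 0" by (auto simp: card_gt_0_iff)
  hence "h \<ge> 1" using ch(2) by simp
  hence "card {x::'a. x^h = 1} \<le> card (sqs K)" using roots_unity_card ch(2) by simp
  hence "sqs K = {x. x^h = 1}" using sub by (simp add: card_seteq)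
  thus ?thesis using c by (simp add: h_def)
qed

lemma subfield_char:
  fixes K :: "'a::{field,finite} set"
  assumes K: "is_subfield K"
  shows "(of_nat (card K) :: 'a) = 0"
proof -
  have bij: "bij_betw (\<lambda>y. 1 + y) K K"
  proof (rule bij_betw_byWitness[where f'="\<lambda>y. y - 1"])
    show "(\<lambda>y. 1 + y) ` K \<subseteq> K" using subfield_props(2,3)[OF K] by blast
    have "\<And>y. y \<in> K \<Longrightarrow> y - 1 \<in> K"
    proof -
      fix y assume "y \<in> K"
      moreover have "- 1 \<in> K" using subfield_props(2,5)[OF K] by blast
      ultimately have "y + - 1 \<in> K" using subfield_props(3)[OF K] by blast
      thus "y - 1 \<in> K" by simp
    qed
    thus "(\<lambda>y. y - 1) ` K \<subseteq> K" by blast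
  qed auto
  have "sum (\<lambda>y. y) K = sum (\<lambda>y. 1 + y) K"
    using sum.reindex_bij_betw[OF bij, of "\<lambda>y. y"] by simp
  also have "\<dots> = of_nat (card K) + sum (\<lambda>y. y) K" by (simp add: sum.distrib)
  finally show ?thesis by simp
qed

lemma char_facts:
  assumes p: "prime (p::nat)" "k \<ge> 1" and z: "(of_nat (p^k)::'a::field) = 0"
  shows "odd (p^k) \<Longrightarrow> (2::'a) \<noteq> 0" and "even (p^k) \<Longrightarrow> (2::'a) = 0"
proof -
  have p0: "(of_nat p :: 'a) = 0" using z by (simp add: of_nat_power)
  show "odd (p^k) \<Longrightarrow> (2::'a) \<noteq> 0"
  proof
    assume "odd (p^k)" "(2::'a) = 0"
    hence "odd p" using p by (simp add: even_power)
    then obtain j where "p = 2*j+1" by (rule oddE)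
    hence "(of_nat p :: 'a) = 2 * of_nat j + 1" by simp
    with \<open>(2::'a) = 0\<close> p0 show False by simp
  qed
  show "even (p^k) \<Longrightarrow> (2::'a) = 0"
  proof -
    assume "even (p^k)"
    hence "even p" using p by (simp add: even_power)
    hence "p = 2" using p unfolding prime_nat_iff by auto
    thus ?thesis using p0 by simp
  qed
qed

lemma pt_mem: "y \<in> pt F x \<longleftrightarrow> (\<exists>c\<in>F. y = c*x)"
  by (auto simp: pt_def)

lemma pt_eq:
  assumes F: "is_subfield F" and x: "(x::'a::field) \<noteq> 0" and y: "y \<noteq> 0"
  shows "pt F x = pt F y \<longleftrightarrow> y / x \<in> F"
proof
  assume "pt F x = pt F y"
  hence "y \<in> pt F x" using F by (metis pt_mem subfield_props(2) mult_1)
  then obtain c where "c \<in> F" "y = c * x" by (auto simp: pt_mem)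
  thus "y / x \<in> F" using x by simp
next
  assume d: "y / x \<in> F"
  have yx: "y = (y/x) * x" using x by simp
  have d0: "y / x \<noteq> 0" using x y by simp
  show "pt F x = pt F y"
  proof (rule set_eqI)
    fix z
    show "z \<in> pt F x \<longleftrightarrow> z \<in> pt F y"
    proof
      assume "z \<in> pt F x"
      then obtain c where c: "c \<in> F" "z = c * x" by (auto simp: pt_mem)
      have "z = (c / (y/x)) * y" using c x y by (simp add: field_simps)
      moreover have "c / (y/x) \<in> F" using c d F subfield_div by blast
      ultimately show "z \<in> pt F y" unfolding pt_mem by blast
    next
      assume "z \<in> pt F y"
      then obtain c where c: "c \<in> F" "z = c * y" by (auto simp: pt_mem)
      have "z = (c * (y/x)) * x" using c x by simp
      moreover have "c * (y/x) \<in> F" using c d F subfield_props by blast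
      ultimately show "z \<in> pt F x" unfolding pt_mem by blast
    qed
  qed
qed

lemma jmap_pt:
  assumes F: "is_subfield F" and x: "(x::'a::field) \<noteq> 0"
  shows "jmap F (pt F x) = pt F (inverse x)"
proof -
  define z where "z = (SOME z. z \<noteq> 0 \<and> pt F x = pt F z)"
  have "z \<noteq> 0 \<and> pt F x = pt F z" unfolding z_def by (rule someI[of _ x]) (use x in simp)
  hence z: "z \<noteq> 0" "z / x \<in> F" using pt_eq[OF F x] by auto
  have "inverse x / inverse z = z / x" by (simp add: field_simps)
  hence "pt F (inverse z) = pt F (inverse x)" using pt_eq[OF F] z x by simp
  thus ?thesis by (simp add: jmap_def z_def)
qed

lemma lineD_alt:
  assumes "(x::'a::field) \<noteq> 0"
  shows "lineD F C x = (\<lambda>y. pt F y) ` ((\<lambda>c. c*x) ` (C - {0}))"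
  using assms by (auto simp: lineD_def)

lemma F_sub_C:
  fixes F C :: "'a::{field,finite} set"
  assumes F: "is_subfield F" and C: "is_subfield C" and Fc: "card F = q" and Cc: "card C = q^2"
  shows "F \<subseteq> C"
proof
  fix x assume xF: "x \<in> F"
  show "x \<in> C"
  proof (cases "x = 0")
    case True thus ?thesis using C subfield_props by blast
  next
    case False
    have q2: "q \<ge> 2"
    proof -
      have "{0,1} \<subseteq> F" using F subfield_props by blast
      hence "card {0::'a,1} \<le> card F" by (intro card_mono) simp_all
      hence "card {0::'a,1} \<le> q" using Fc by simp
      thus ?thesis by simp
    qed
    obtain m where m: "q = Suc m" using q2 by (cases q) auto
    have e: "q^2 - 1 = (q - 1) * (q + 1)" unfolding m by (simp add: power2_eq_square)
    have "x ^ (q - 1) = 1" using subfield_lagrange[OF F xF False] Fc by simp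
    hence xr: "x ^ (q^2 - 1) = 1" unfolding e power_mult by simp
    let ?R = "{x::'a. x ^ (q^2 - 1) = 1}"
    have sub: "C - {0} \<subseteq> ?R" using subfield_lagrange[OF C] Cc by auto
    have "2*2 \<le> q*q" using mult_le_mono[OF q2 q2] .
    hence "q^2 - 1 \<ge> 1" by (simp add: power2_eq_square)
    hence "card ?R \<le> q^2 - 1" by (intro roots_unity_card) simp
    also have "\<dots> = card (C - {0})" using Cc subfield_props(1)[OF C] by (simp add: card_Diff_singleton)
    finally have "C - {0} = ?R" using sub by (simp add: card_seteq)
    thus ?thesis using xr by auto
  qed
qed

definition Mset :: "'a::field set \<Rightarrow> 'a \<Rightarrow> 'a set" where "Mset C x = (\<lambda>c. c*x) ` (C - {0})"

lemma lineD_M: "(x::'a::field) \<noteq> 0 \<Longrightarrow> lineD F C x = pt F ` Mset C x"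
  by (simp add: lineD_alt Mset_def)

lemma jmap_line:
  fixes x :: "'a::field"
  assumes F: "is_subfield F" and C: "is_subfield C" and x: "x \<noteq> 0"
  shows "jmap F ` lineD F C x = pt F ` Mset C (inverse x)"
proof -
  have "jmap F ` lineD F C x = (\<lambda>c. pt F (inverse c * inverse x)) ` (C - {0})"
    using x by (auto simp: lineD_M[OF x] Mset_def image_image jmap_pt[OF F])
  also have "\<dots> = pt F ` Mset C (inverse x)"
  proof (rule set_eqI, rule iffI)
    fix z assume "z \<in> (\<lambda>c. pt F (inverse c * inverse x)) ` (C - {0})"
    then obtain c where "c \<in> C" "c \<noteq> 0" "z = pt F (inverse c * inverse x)" by auto
    thus "z \<in> pt F ` Mset C (inverse x)" unfolding Mset_def
      using C subfield_props(6) by fastforce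
  next
    fix z assume "z \<in> pt F ` Mset C (inverse x)"
    then obtain c where c: "c \<in> C" "c \<noteq> 0" "z = pt F (c * inverse x)" by (auto simp: Mset_def)
    hence "z = pt F (inverse (inverse c) * inverse x)" by simp
    moreover have "inverse c \<in> C - {0}" using c C subfield_props(6) by auto
    ultimately show "z \<in> (\<lambda>c. pt F (inverse c * inverse x)) ` (C - {0})" by blast
  qed
  finally show ?thesis .
qed

lemma M_eq:
  fixes x y :: "'a::field"
  assumes C: "is_subfield C" and x: "x \<noteq> 0" and y: "y \<noteq> 0" and d: "y / x \<in> C"
  shows "Mset C x = Mset C y"
proof (rule set_eqI, rule iffI)
  have d0: "y / x \<noteq> 0" using x y by simp
  fix z assume "z \<in> Mset C x"
  then obtain c where c: "c \<in> C" "c \<noteq> 0" "z = c * x" by (auto simp: Mset_def)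
  have "z = (c / (y/x)) * y" using c x y by (simp add: field_simps)
  moreover have "c / (y/x) \<in> C - {0}"
  proof -
    have "c / (y/x) \<in> C" by (rule subfield_div[OF C c(1) d])
    moreover have "c / (y/x) \<noteq> 0" using c(2) d0 by simp
    ultimately show ?thesis by blast
  qed
  ultimately show "z \<in> Mset C y" unfolding Mset_def by blast
next
  have d0: "y / x \<noteq> 0" using x y by simp
  fix z assume "z \<in> Mset C y"
  then obtain c where c: "c \<in> C" "c \<noteq> 0" "z = c * y" by (auto simp: Mset_def)
  have "z = (c * (y/x)) * x" using c x by simp
  moreover have "c * (y/x) \<in> C - {0}"
  proof -
    have "c * (y/x) \<in> C" by (rule subfield_props(4)[OF C c(1) d])
    moreover have "c * (y/x) \<noteq> 0" using c(2) d0 by simp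
    ultimately show ?thesis by blast
  qed
  ultimately show "z \<in> Mset C x" unfolding Mset_def by blast
qed

lemma fixed_iff:
  fixes x :: "'a::field"
  assumes F: "is_subfield F" and C: "is_subfield C" and FC: "F \<subseteq> C" and x: "x \<noteq> 0"
  shows "jmap F ` lineD F C x = lineD F C x \<longleftrightarrow> x^2 \<in> C"
proof
  assume "x^2 \<in> C"
  hence "x / inverse x \<in> C" by (simp add: power2_eq_square divide_inverse)
  hence "Mset C (inverse x) = Mset C x" using M_eq[OF C] x by simp
  thus "jmap F ` lineD F C x = lineD F C x" using jmap_line[OF F C x] lineD_M[OF x] by simp
next
  assume "jmap F ` lineD F C x = lineD F C x"
  hence "pt F ` Mset C (inverse x) = pt F ` Mset C x" using jmap_line[OF F C x] lineD_M[OF x] by simp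
  moreover have "pt F (inverse x) \<in> pt F ` Mset C (inverse x)"
    using C subfield_props(2) by (force simp: Mset_def)
  ultimately obtain c where c: "c \<in> C" "c \<noteq> 0" "pt F (inverse x) = pt F (c * x)"
    by (auto simp: Mset_def)
  hence "(c*x) / inverse x \<in> F" using pt_eq[OF F] x by simp
  hence "c * x^2 \<in> C" using FC by (auto simp: power2_eq_square divide_inverse mult.assoc)
  hence "(c * x^2) / c \<in> C" using c C subfield_div by blast
  thus "x^2 \<in> C" using c by simp
qed

lemma line_eq:
  fixes x y :: "'a::field"
  assumes F: "is_subfield F" and C: "is_subfield C" and FC: "F \<subseteq> C" and x: "x \<noteq> 0" and y: "y \<noteq> 0"
  shows "lineD F C x = lineD F C y \<longleftrightarrow> y / x \<in> C"
proof
  assume "y / x \<in> C" thus "lineD F C x = lineD F C y"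
    using M_eq[OF C x y] lineD_M x y by metis
next
  assume "lineD F C x = lineD F C y"
  moreover have "pt F y \<in> lineD F C y"
    using C subfield_props(2) y by (force simp: Mset_def lineD_M)
  ultimately obtain c where c: "c \<in> C" "c \<noteq> 0" "pt F y = pt F (c * x)"
    using x by (auto simp: Mset_def lineD_M)
  have cx: "c * x \<noteq> 0" using c x by simp
  have "pt F (c*x) = pt F y" using c(3) by simp
  hence "y / (c*x) \<in> F" using iffD1[OF pt_eq[OF F cx y]] by blast
  hence "c * (y / (c*x)) \<in> C" using FC c C subfield_props by blast
  thus "y / x \<in> C" using c by simp
qed

lemma nat_pow_diff:
  assumes "(r::nat) \<ge> 1"
  shows "r^t - 1 = (r - 1) * (\<Sum>i<t. r^i)"
proof -
  have "r^t \<ge> 1" using assms by simp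
  hence "int (r^t - 1) = int r ^ t - 1" by (simp add: of_nat_diff)
  also have "\<dots> = (int r - 1) * (\<Sum>i<t. int r ^ i)" by (rule power_diff_1_eq)
  also have "\<dots> = int ((r - 1) * (\<Sum>i<t. r^i))" using assms by (simp add: of_nat_diff)
  finally show ?thesis by (simp only: of_nat_eq_iff)
qed

lemma sum_parity:
  assumes "odd (r::nat)"
  shows "even (\<Sum>i<t. r^i) \<longleftrightarrow> even t"
  by (induction t) (use assms in auto)

lemma S_eq:
  fixes F C :: "'a::field set"
  assumes F: "is_subfield F" and C: "is_subfield C" and FC: "F \<subseteq> C"
  shows "{l \<in> spreadD F C. jmap F ` l = l} = lineD F C ` {x. x \<noteq> 0 \<and> x^2 \<in> C}"
proof (rule set_eqI, rule iffI)
  fix l assume "l \<in> {l \<in> spreadD F C. jmap F ` l = l}"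
  then obtain x where x: "x \<noteq> 0" "l = lineD F C x" "jmap F ` l = l" by (auto simp: spreadD_def)
  hence "x^2 \<in> C" using fixed_iff[OF F C FC x(1)] by simp
  thus "l \<in> lineD F C ` {x. x \<noteq> 0 \<and> x^2 \<in> C}" using x by blast
next
  fix l assume "l \<in> lineD F C ` {x. x \<noteq> 0 \<and> x^2 \<in> C}"
  then obtain x where x: "x \<noteq> 0" "x^2 \<in> C" "l = lineD F C x" by blast
  hence "jmap F ` l = l" using fixed_iff[OF F C FC x(1)] by simp
  moreover have "l \<in> spreadD F C" using x by (auto simp: spreadD_def)
  ultimately show "l \<in> {l \<in> spreadD F C. jmap F ` l = l}" by blast
qed

lemma count_lines:
  fixes F C :: "'a::{field,finite} set"
  assumes F: "is_subfield F" and C: "is_subfield C" and FC: "F \<subseteq> C"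
  shows "card {x. x \<noteq> 0 \<and> x^2 \<in> C} = (card C - 1) * card (lineD F C ` {x. x \<noteq> 0 \<and> x^2 \<in> C})"
proof (rule fiber_card[where f = "lineD F C"])
  let ?G = "{x. x \<noteq> 0 \<and> x^2 \<in> C}"
  show "finite ?G" by simp
  show "lineD F C ` ?G = lineD F C ` ?G" ..
  fix b assume "b \<in> lineD F C ` ?G"
  then obtain x0 where x0: "x0 \<noteq> 0" "x0^2 \<in> C" "b = lineD F C x0" by blast
  have "{a \<in> ?G. lineD F C a = b} = (\<lambda>c. c * x0) ` (C - {0})"
  proof (rule set_eqI, rule iffI)
    fix a assume a: "a \<in> {a \<in> ?G. lineD F C a = b}"
    hence "a / x0 \<in> C" using line_eq[OF F C FC x0(1), of a] x0(3) by auto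
    moreover have "a / x0 \<noteq> 0" using a x0 by auto
    moreover have "a = (a / x0) * x0" using x0 by simp
    ultimately show "a \<in> (\<lambda>c. c * x0) ` (C - {0})" by blast
  next
    fix a assume "a \<in> (\<lambda>c. c * x0) ` (C - {0})"
    then obtain c where c: "c \<in> C" "c \<noteq> 0" "a = c * x0" by blast
    have a0: "a \<noteq> 0" using c x0 by simp
    have "a^2 = (c*c) * x0^2" using c by (simp add: power2_eq_square ac_simps)
    moreover have "(c*c) * x0^2 \<in> C" using subfield_props(4)[OF C subfield_props(4)[OF C c(1) c(1)] x0(2)] .
    ultimately have a2: "a^2 \<in> C" by simp
    have "a / x0 = c" using c x0 by simp
    hence "lineD F C x0 = lineD F C a" using line_eq[OF F C FC x0(1) a0] c by simp
    thus "a \<in> {a \<in> ?G. lineD F C a = b}" using a0 a2 x0 by simp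
  qed
  moreover have "card ((\<lambda>c. c * x0) ` (C - {0})) = card (C - {0})"
    by (rule card_image) (use x0 in \<open>auto simp: inj_on_def\<close>)
  moreover have "card (C - {0}) = card C - 1" using subfield_props(1)[OF C] by (simp add: card_Diff_singleton)
  ultimately show "card {a \<in> ?G. lineD F C a = b} = card C - 1" by simp
qed

lemma G_even:
  fixes C :: "'a::{field,finite} set"
  assumes C: "is_subfield C" and two: "(2::'a) = 0" and ev: "even (card C)"
  shows "{x. x \<noteq> 0 \<and> x^2 \<in> C} = C - {0}"
proof (rule set_eqI, rule iffI)
  fix x assume "x \<in> {x. x \<noteq> 0 \<and> x^2 \<in> C}"
  hence x: "x \<noteq> 0" "x^2 \<in> C" by auto
  define c where "c = x^2"
  have c0: "c \<noteq> 0" using x by (simp add: c_def)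
  have "c ^ (card C - 1) = 1" using subfield_lagrange[OF C x(2) [folded c_def] c0] .
  have "card C > 0" using subfield_props(1)[OF C] by (auto simp: card_gt_0_iff)
  hence "card C = Suc (card C - 1)" by simp
  hence "c ^ card C = c * c ^ (card C - 1)" by (metis power_Suc)
  hence cc: "c ^ card C = c" using \<open>c ^ (card C - 1) = 1\<close> by simp
  define y where "y = c ^ (card C div 2)"
  have yC: "y \<in> C" unfolding y_def by (rule subfield_pow[OF C x(2)[folded c_def]])
  have "y^2 = c ^ (2 * (card C div 2))" by (simp add: y_def power_mult[symmetric] mult.commute)
  also have "2 * (card C div 2) = card C" using ev by simp
  finally have y2: "y^2 = x^2" using cc by (simp add: c_def)
  have e1: "(x - y)^2 = x^2 + y^2 - 2 * x * y" by (rule power2_diff)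
  have e2: "2 * x * y = 0" using two by simp
  have e3: "x^2 + y^2 = 2 * x^2" using y2 mult_2[of "x^2"] by simp
  have e4: "2 * x^2 = 0" using two by simp
  have "(x - y)^2 = 0" unfolding e1 e2 e3 e4 by simp
  hence "x = y" by simp
  thus "x \<in> C - {0}" using yC x by simp
next
  fix x assume "x \<in> C - {0}"
  thus "x \<in> {x. x \<noteq> 0 \<and> x^2 \<in> C}" using subfield_pow[OF C] by auto
qed

lemma G_odd:
  fixes C :: "'a::{field,finite} set"
  assumes C: "is_subfield C" and two: "(2::'a) \<noteq> 0"
  shows "card {x. x \<noteq> 0 \<and> x^2 \<in> C} = 2 * card ((C - {0}) \<inter> sqs UNIV)"
proof (rule fiber_card[where f = "\<lambda>x. x^2"])
  let ?G = "{x::'a. x \<noteq> 0 \<and> x^2 \<in> C}"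
  show "finite ?G" by simp
  show "(\<lambda>x. x^2) ` ?G = (C - {0}) \<inter> sqs UNIV"
    unfolding sqs_def by auto
  fix b assume "b \<in> (C - {0}) \<inter> sqs UNIV"
  then obtain y0 where y0: "y0 \<noteq> 0" "b = y0^2" "b \<in> C" unfolding sqs_def by blast
  have "{a \<in> ?G. a^2 = b} = {y0, -y0}"
  proof
    show "{a \<in> ?G. a^2 = b} \<subseteq> {y0, -y0}"
    proof
      fix a assume "a \<in> {a \<in> ?G. a^2 = b}"
      hence "a^2 = y0^2" using y0(2) by simp
      hence "a = y0 \<or> a = -y0" by (simp add: power2_eq_iff)
      thus "a \<in> {y0, -y0}" by blast
    qed
    show "{y0, -y0} \<subseteq> {a \<in> ?G. a^2 = b}"
      using y0 by auto
  qed
  moreover have "y0 \<noteq> -y0"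
  proof
    assume h: "y0 = -y0"
    have "2 * y0 = y0 + y0" by (rule mult_2)
    also have "\<dots> = -y0 + y0" using arg_cong[OF h, of "\<lambda>t. t + y0"] .
    also have "\<dots> = 0" by (rule left_minus)
    finally have "2 * y0 = 0" .
    with two y0(1) show False by simp
  qed
  ultimately show "card {a \<in> ?G. a^2 = b} = 2" by simp
qed

lemma T_4:
  fixes C :: "'a::{field,finite} set"
  assumes C: "is_subfield C" and two: "(2::'a) \<noteq> 0"
    and Q: "card (UNIV::'a set) - 1 = (card C - 1) * m" and m: "even m"
  shows "(C - {0}) \<inter> sqs UNIV = C - {0}"
proof -
  have "C - {0} \<subseteq> sqs UNIV"
  proof
    fix c assume c: "c \<in> C - {0}"
    have e: "(card (UNIV::'a set) - 1) div 2 = (card C - 1) * (m div 2)" using Q m by auto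
    have "c ^ ((card (UNIV::'a set) - 1) div 2) = (c ^ (card C - 1)) ^ (m div 2)"
      unfolding e by (simp add: power_mult)
    also have "\<dots> = 1" using subfield_lagrange[OF C] c by simp
    finally have "c ^ ((card (UNIV::'a set) - 1) div 2) = 1" .
    thus "c \<in> sqs UNIV" using euler_crit[OF subfield_UNIV two] c by simp
  qed
  thus ?thesis by blast
qed

lemma T_not4:
  fixes C :: "'a::{field,finite} set"
  assumes C: "is_subfield C" and two: "(2::'a) \<noteq> 0"
    and Q: "card (UNIV::'a set) - 1 = (card C - 1) * m" and m: "odd m"
    and ev: "even (card C - 1)"
  shows "(C - {0}) \<inter> sqs UNIV = sqs C"
proof (rule set_eqI, rule iffI)
  fix c assume "c \<in> (C - {0}) \<inter> sqs UNIV"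
  then obtain y where c: "c \<in> C" "c \<noteq> 0" "c = y^2" "y \<noteq> 0" unfolding sqs_def by blast
  define h where "h = (card C - 1) div 2"
  have h2: "card C - 1 = 2 * h" using ev by (simp add: h_def)
  have "(card (UNIV::'a set) - 1) = 2 * (h * m)" using Q h2 by simp
  hence "c ^ (h * m) = y ^ (card (UNIV::'a set) - 1)" using c(3) by (simp add: power_mult)
  also have "\<dots> = 1" using subfield_lagrange[OF subfield_UNIV, of y] c(4) by simp
  finally have cm: "(c ^ h) ^ m = 1" by (simp add: power_mult)
  have "(c ^ h)^2 = c ^ (card C - 1)" using h2 by (simp add: power_mult[symmetric] mult.commute)
  also have "\<dots> = 1" using subfield_lagrange[OF C c(1,2)] .
  finally have "c ^ h = 1 \<or> c ^ h = -1" by (simp add: power2_eq_1_iff)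
  moreover have "c ^ h \<noteq> -1"
  proof
    assume "c ^ h = -1"
    hence "(-1::'a) ^ m = 1" using cm by simp
    hence "(-1::'a) = 1" using m by simp
    hence "(2::'a) = 0" by (metis one_add_one add.right_inverse)
    with two show False ..
  qed
  ultimately have "c ^ h = 1" by blast
  thus "c \<in> sqs C" using euler_crit[OF C two c(1,2)] by (simp add: h_def)
next
  fix c assume "c \<in> sqs C"
  then obtain y where y: "y \<in> C" "y \<noteq> 0" "c = y^2" unfolding sqs_def by blast
  have "c \<in> C" using subfield_pow[OF C y(1)] y(3) by simp
  thus "c \<in> (C - {0}) \<inter> sqs UNIV" using y unfolding sqs_def by auto
qed

theorem mainTheorem4:
  fixes F C :: "'a::{field,finite} set" and q n :: nat
  assumes q_pp: "\<exists>p k. prime p \<and> k \<ge> 1 \<and> q = p ^ k"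
    and n_ge: "n \<ge> 2"
    and F_sub: "is_subfield F" and F_card: "card F = q"
    and L_card: "card (UNIV :: 'a set) = q ^ n"
    and n_even: "even n"
    and C_sub: "is_subfield C" and C_card: "card C = q ^ 2"
  shows "card {l \<in> spreadD F C. jmap F ` l = l} =
           (if 4 dvd n \<and> odd q then 2 else 1)"
proof -
  obtain p k where pk: "prime p" "k \<ge> 1" "q = p ^ k" using q_pp by blast
  have charF: "(of_nat (p^k) :: 'a) = 0" using subfield_char[OF F_sub] F_card pk(3) by simp
  have FC: "F \<subseteq> C" by (rule F_sub_C[OF F_sub C_sub F_card C_card])
  define G where "G = {x::'a. x \<noteq> 0 \<and> x^2 \<in> C}"
  define S where "S = {l \<in> spreadD F C. jmap F ` l = l}"
  have SG: "S = lineD F C ` G" unfolding S_def G_def by (rule S_eq[OF F_sub C_sub FC])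
  have cG: "card G = (q^2 - 1) * card S"
    unfolding SG G_def using count_lines[OF F_sub C_sub FC] C_card by simp
  have p2: "p \<ge> 2" using pk(1) by (simp add: prime_ge_2_nat)
  have "q \<ge> 2"
  proof -
    have "p ^ 1 \<le> p ^ k" using pk(2) p2 by (intro power_increasing) auto
    thus ?thesis using p2 pk(3) by simp
  qed
  hence "2*2 \<le> q*q" using mult_le_mono by blast
  hence qpos: "q^2 - 1 > 0" by (simp add: power2_eq_square)
  show ?thesis
  proof (cases "odd q")
    case False
    have two: "(2::'a) = 0" using char_facts(2)[OF pk(1,2) charF] False pk(3) by simp
    have "even (card C)" using False C_card by simp
    hence "G = C - {0}" unfolding G_def by (rule G_even[OF C_sub two])
    hence "card G = q^2 - 1" using C_card subfield_props(1)[OF C_sub] by (simp add: card_Diff_singleton)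
    hence "(q^2 - 1) * card S = (q^2 - 1) * 1" using cG by simp
    hence "card S = 1" using qpos mult_left_cancel[of "q^2 - 1"] by simp
    thus ?thesis using False by (simp add: S_def)
  next
    case True
    have two: "(2::'a) \<noteq> 0" using char_facts(1)[OF pk(1,2) charF] True pk(3) by simp
    have cGT: "card G = 2 * card ((C - {0}) \<inter> sqs UNIV)" unfolding G_def by (rule G_odd[OF C_sub two])
    obtain t where nt: "n = 2 * t" using n_even by blast
    define m where "m = (\<Sum>i<t. (q^2)^i)"
    have "q^2 \<ge> 1" using qpos by simp
    hence "(q^2)^t - 1 = (q^2 - 1) * m" unfolding m_def by (rule nat_pow_diff)
    hence Q: "card (UNIV::'a set) - 1 = (card C - 1) * m" using L_card C_card nt by (simp add: power_mult)
    have "odd (q^2)" using True by simp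
    hence mt: "even m \<longleftrightarrow> even t" unfolding m_def by (rule sum_parity)
    have n4: "4 dvd n \<longleftrightarrow> even t" using nt by auto
    show ?thesis
    proof (cases "even t")
      case True
      have "(C - {0}) \<inter> sqs UNIV = C - {0}" using T_4[OF C_sub two Q] mt True by simp
      hence cG2: "card G = 2 * (q^2 - 1)" using cGT C_card subfield_props(1)[OF C_sub] by (simp add: card_Diff_singleton)
      have "(q^2 - 1) * card S = (q^2 - 1) * 2" using cG cG2 by (metis mult.commute)
      hence "card S = 2" using qpos mult_left_cancel[of "q^2 - 1"] by auto
      thus ?thesis using True \<open>odd q\<close> n4 by (simp add: S_def)
    next
      case False
      have evC: "even (card C - 1)" using \<open>odd q\<close> C_card by simp
      have "(C - {0}) \<inter> sqs UNIV = sqs C" using T_not4[OF C_sub two Q _ evC] mt False by simp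
      moreover have "card C - 1 = 2 * card (sqs C)" by (rule sq_card[OF C_sub two])
      ultimately have "card G = q^2 - 1" using cGT C_card by simp
      hence "(q^2 - 1) * card S = (q^2 - 1) * 1" using cG by simp
      hence "card S = 1" using qpos mult_left_cancel[of "q^2 - 1"] by simp
      thus ?thesis using False n4 by (simp add: S_def)
    qed
  qed
qed

end
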